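(* Let $A\in\mathbb{R}^{n\times n}$ and $B\in\mathbb{R}^{n\times m}$ with $\rho(|A|)<1$, and let $T$ be a positive integer. Let $i,j\in\{1,\dots,n\}$, $i\neq j$, and $w\in\mathbb{R}$ be such that $\rho(|A|+|w|e_je_i^{\top})<1$. Then, whenever the respective Gramians are positive definite, $$\operatorname{tr}(\mathcal{W}_A^{-1})\ge\frac{n^2}{\operatorname{tr}(\mathcal{H}_{\mathcal{X}})},\qquad \operatorname{tr}(\mathcal{W}^{-1}_{A+we_je_i^{\top}})\ge\frac{n^2}{(1+\alpha\beta)\operatorname{tr}(\mathcal{H}_{\mathcal{X}})+\alpha^2\gamma\bar\gamma}.$$
   Context: $|\cdot|$ is taken entrywise; $\rho$ is the spectral radius; $e_k$ is the $k$-th canonical unit vector; $\|\cdot\|$ is the Euclidean norm. For $Z\in\mathbb{R}^{n\times n}$, $\mathcal{W}_Z=\sum_{t=0}^{T-1}Z^tBB^{\top}(Z^t)^{\top}$. Define $\mathcal{X}=(I-|A|)^{-1}$, $\mathcal{H}_{\mathcal{X}}=\mathcal{X}|B||B|^{\top}\mathcal{X}^{\top}$, $\alpha_{pq}=\frac{|w|}{1-|w|e_p^{\top}\mathcal{X}e_q}$, $\alpha=\max_{p\neq q}\alpha_{pq}$, $\beta=\max\{\max_{p\neq q}2e_p^{\top}\mathcal{X}e_q,\ \max_{p\neq q}e_p^{\top}\mathcal{X}e_q+\max_{q}\|\mathcal{X}e_q\|\}$, $\gamma=\max_k e_k^{\top}\mathcal{X}^{\top}\mathcal{X}e_k$, $\bar\gamma=\max_k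 e_k^{\top}\mathcal{X}|B||B|^{\top}\mathcal{X}^{\top}e_k$. *)

theory Defs
  imports "Jordan_Normal_Form.Spectral_Radius"
begin

definition abs_mat :: "real mat \<Rightarrow> real mat" where
  "abs_mat M = map_mat abs M"

definition rho :: "real mat \<Rightarrow> real" where
  "rho M = spectral_radius (map_mat complex_of_real M)"

definition trace_mat :: "real mat \<Rightarrow> real" where
  "trace_mat M = (\<Sum>k<dim_row M. M $$ (k, k))"

definition inv_mat :: "real mat \<Rightarrow> real mat" where
  "inv_mat M = (THE N. N \<in> carrier_mat (dim_row M) (dim_row M) \<and>
                       M * N = 1\<^sub>m (dim_row M) \<and> N * M = 1\<^sub>m (dim_row M))"

definition pos_def_mat :: "real mat \<Rightarrow> bool" where
  "pos_def_mat M \<longleftrightarrow> M \<in> carrier_mat (dim_row M) (dim_row M) \<and> M\<^sup>T = M \<and>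
     (\<forall>x \<in> carrier_vec (dim_row M). x \<noteq> 0\<^sub>v (dim_row M) \<longrightarrow> x \<bullet> (M *\<^sub>v x) > 0)"

definition unit_outer :: "nat \<Rightarrow> nat \<Rightarrow> nat \<Rightarrow> real mat" where
  "unit_outer n j i = mat_of_cols n [unit_vec n j] * mat_of_rows n [unit_vec n i]"

definition gramian :: "real mat \<Rightarrow> real mat \<Rightarrow> nat \<Rightarrow> real mat" where
  "gramian Z B T = fold (\<lambda>t W. W + (Z ^\<^sub>m t) * B * B\<^sup>T * (Z ^\<^sub>m t)\<^sup>T) [0..<T]
                      (0\<^sub>m (dim_row Z) (dim_row Z))"

definition Xmat :: "real mat \<Rightarrow> real mat" where
  "Xmat A = inv_mat (1\<^sub>m (dim_row A) - abs_mat A)"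

definition Hmat :: "real mat \<Rightarrow> real mat \<Rightarrow> real mat" where
  "Hmat A B = Xmat A * abs_mat B * (abs_mat B)\<^sup>T * (Xmat A)\<^sup>T"

(* e_p^T M e_q is the entry M $$ (p,q); ||v|| the Euclidean norm *)
definition vec_norm :: "real vec \<Rightarrow> real" where
  "vec_norm v = sqrt (v \<bullet> v)"

definition offdiag :: "nat \<Rightarrow> (nat \<times> nat) set" where
  "offdiag n = {(p, q). p < n \<and> q < n \<and> p \<noteq> q}"

definition alpha_pq :: "real mat \<Rightarrow> real \<Rightarrow> nat \<Rightarrow> nat \<Rightarrow> real" where
  "alpha_pq A w p q = \<bar>w\<bar> / (1 - \<bar>w\<bar> * (Xmat A $$ (p, q)))"

definition alpha_c :: "real mat \<Rightarrow> real \<Rightarrow> real" where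
  "alpha_c A w = Max ((\<lambda>(p, q). alpha_pq A w p q) ` offdiag (dim_row A))"

definition beta_c :: "real mat \<Rightarrow> real" where
  "beta_c A = max (Max ((\<lambda>(p, q). 2 * (Xmat A $$ (p, q))) ` offdiag (dim_row A)))
                  (Max ((\<lambda>(p, q). Xmat A $$ (p, q)) ` offdiag (dim_row A))
                   + Max ((\<lambda>q. vec_norm (col (Xmat A) q)) ` {..<dim_row A}))"

definition gamma_c :: "real mat \<Rightarrow> real" where
  "gamma_c A = Max ((\<lambda>k. ((Xmat A)\<^sup>T * Xmat A) $$ (k, k)) ` {..<dim_row A})"

definition gamma_bar_c :: "real mat \<Rightarrow> real mat \<Rightarrow> real" where
  "gamma_bar_c A B = Max ((\<lambda>k. Hmat A B $$ (k, k)) ` {..<dim_row A})"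

end

theory Submission
  imports Defs
begin

lemma mult_entry:
  assumes "A \<in> carrier_mat a n" "B \<in> carrier_mat n b" "p < a" "q < b"
  shows "(A * B) $$ (p,q) = (\<Sum>l<n. A $$ (p,l) * B $$ (l,q))"
  using assms by (simp add: scalar_prod_def lessThan_atLeast0)

lemma mult_vec_entry:
  assumes "A \<in> carrier_mat a n" "v \<in> carrier_vec n" "p < a"
  shows "(A *\<^sub>v v) $ p = (\<Sum>l<n. A $$ (p,l) * v $ l)"
  using assms by (simp add: scalar_prod_def lessThan_atLeast0)

lemma inv_mat_unique:
  assumes A: "A \<in> carrier_mat n n" and N: "N \<in> carrier_mat n n"
    and AN: "A * N = 1\<^sub>m n" and NA: "N * A = 1\<^sub>m n"
  shows "inv_mat A = N"
proof -
  have dr: "dim_row A = n" using A by auto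
  show ?thesis unfolding inv_mat_def dr
  proof (rule the_equality)
    show "N \<in> carrier_mat n n \<and> A * N = 1\<^sub>m n \<and> N * A = 1\<^sub>m n" using assms by auto
    fix N' assume h: "N' \<in> carrier_mat n n \<and> A * N' = 1\<^sub>m n \<and> N' * A = 1\<^sub>m n"
    have "N' = N' * (A * N)" using h AN by (metis right_mult_one_mat)
    also have "\<dots> = (N' * A) * N" using assoc_mult_mat h A N by metis
    also have "\<dots> = N" using h N by simp
    finally show "N' = N" .
  qed
qed

lemma inv_mat_ex:
  assumes A: "A \<in> carrier_mat n n"
    and ker: "\<And>v. v \<in> carrier_vec n \<Longrightarrow> A *\<^sub>v v = 0\<^sub>v n \<Longrightarrow> v = 0\<^sub>v n"
  shows "inv_mat A \<in> carrier_mat n n \<and> A * inv_mat A = 1\<^sub>m n \<and> inv_mat A * A = 1\<^sub>m n"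
proof -
  have "det A \<noteq> 0" using det_0_iff_vec_prod_zero[OF A] ker by auto
  from det_non_zero_imp_unit[OF A this, of undefined]
  obtain N where N: "N \<in> carrier_mat n n" "N * A = 1\<^sub>m n" "A * N = 1\<^sub>m n"
    unfolding Units_def ring_mat_def by auto
  then show ?thesis using inv_mat_unique[OF A N(1) N(3) N(2)] by auto
qed

lemma smult_pow_mat:
  assumes A: "(A :: 'a :: comm_ring_1 mat) \<in> carrier_mat n n"
  shows "(c \<cdot>\<^sub>m A) ^\<^sub>m k = c ^ k \<cdot>\<^sub>m (A ^\<^sub>m k)"
proof (induct k)
  case 0
  then show ?case using A by (auto intro!: eq_matI)
next
  case (Suc k)
  have "(c \<cdot>\<^sub>m A) ^\<^sub>m Suc k = (c ^ k \<cdot>\<^sub>m (A ^\<^sub>m k)) * (c \<cdot>\<^sub>m A)" using Suc by simp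
  also have "\<dots> = c ^ Suc k \<cdot>\<^sub>m (A ^\<^sub>m Suc k)"
    using A by (intro eq_matI) (auto simp: scalar_prod_def sum_distrib_left ac_simps)
  finally show ?case .
qed

lemma eigenvalue_smult:
  assumes "eigenvalue (A :: 'a :: comm_ring_1 mat) k" and AA: "A \<in> carrier_mat n n"
  shows "eigenvalue (c \<cdot>\<^sub>m A) (c * k)"
proof -
  from assms obtain v where v: "eigenvector A v k" unfolding eigenvalue_def by auto
  let ?n = "dim_row A"
  have A: "A \<in> carrier_mat ?n (dim_col A)" by auto
  have vc: "v \<in> carrier_vec ?n" and Av: "A *\<^sub>v v = k \<cdot>\<^sub>v v" using v unfolding eigenvector_def by auto
  have "(c \<cdot>\<^sub>m A) *\<^sub>v v = c \<cdot>\<^sub>v (A *\<^sub>v v)"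
    using AA vc by (intro eq_vecI) (auto simp: mult_mat_vec_def scalar_prod_def sum_distrib_left ac_simps)
  also have "\<dots> = (c * k) \<cdot>\<^sub>v v" unfolding Av by (simp add: smult_smult_assoc)
  finally have "(c \<cdot>\<^sub>m A) *\<^sub>v v = (c * k) \<cdot>\<^sub>v v" .
  then show ?thesis using v unfolding eigenvalue_def eigenvector_def by (intro exI[of _ v]) auto
qed

lemma map_of_real_pow:
  assumes M: "(M :: real mat) \<in> carrier_mat n n"
  shows "map_mat complex_of_real (M ^\<^sub>m k) = (map_mat complex_of_real M) ^\<^sub>m k"
proof (induct k)
  case 0 then show ?case using M by (auto intro!: eq_matI)
next
  case (Suc k)
  have Mk: "M ^\<^sub>m k \<in> carrier_mat n n" using M by auto
  have "map_mat complex_of_real (M ^\<^sub>m Suc k) = map_mat complex_of_real (M ^\<^sub>m k) * map_mat complex_of_real M"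
    using M Mk by (intro eq_matI) (auto simp: scalar_prod_def)
  then show ?case using Suc by simp
qed

lemma rho_nonneg:
  assumes M: "M \<in> carrier_mat n n" and n: "n > 0"
  shows "rho M \<ge> 0"
proof -
  have C: "map_mat complex_of_real M \<in> carrier_mat n n" using M by auto
  from spectral_radius_mem_max(1)[OF C n] show ?thesis unfolding rho_def by auto
qed

lemma pow_decay:
  fixes M :: "real mat"
  assumes M: "M \<in> carrier_mat n n" and rho: "rho M < 1" and n: "n > 0"
  shows "\<exists>c r. 0 \<le> r \<and> r < 1 \<and> (\<forall>k p q. p < n \<longrightarrow> q < n \<longrightarrow> \<bar>(M ^\<^sub>m k) $$ (p,q)\<bar> \<le> c * r^k)"
proof -
  let ?C = "map_mat complex_of_real M"
  have C: "?C \<in> carrier_mat n n" using M by auto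
  define r where "r = (1 + rho M)/2"
  have rho0: "rho M \<ge> 0" by (rule rho_nonneg[OF M n])
  have r: "0 < r" "r < 1" "rho M < r" using rho rho0 unfolding r_def by auto
  let ?N = "(complex_of_real (1/r)) \<cdot>\<^sub>m ?C"
  have N: "?N \<in> carrier_mat n n" using C by auto
  have CN: "complex_of_real r \<cdot>\<^sub>m ?N = ?C" using C r
    by (intro eq_matI) (auto simp flip: of_real_mult of_real_divide)
  have "spectral_radius ?N < 1"
    unfolding spectral_radius_def
  proof (subst Max_less_iff)
    show "finite (norm ` spectrum ?N)" using card_finite_spectrum(1)[OF N] by auto
    show "norm ` spectrum ?N \<noteq> {}" using spectrum_non_empty[OF N n] by auto
    show "\<forall>a\<in>norm ` spectrum ?N. a < 1"
    proof
      fix a assume "a \<in> norm ` spectrum ?N"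
      then obtain z where z: "z \<in> spectrum ?N" and a: "a = norm z" by auto
      have "eigenvalue ?N z" using z unfolding spectrum_def by auto
      from eigenvalue_smult[OF this N, of "complex_of_real r"]
      have "eigenvalue ?C (complex_of_real r * z)" unfolding CN .
      hence "norm (complex_of_real r * z) \<in> norm ` spectrum ?C" unfolding spectrum_def by auto
      from spectral_radius_mem_max(2)[OF C n this]
      have "r * norm z \<le> rho M" unfolding rho_def using r by (simp add: norm_mult)
      hence "r * norm z < r * 1" using r by linarith
      thus "a < 1" unfolding a using r mult_less_cancel_left_pos by blast
    qed
  qed
  from spectral_radius_jnf_norm_bound_less_1_upper_triangular[OF N this]
  obtain c where c: "\<And>k. norm_bound (?N ^\<^sub>m k) c" by auto
  have "\<forall>k p q. p < n \<longrightarrow> q < n \<longrightarrow> \<bar>(M ^\<^sub>m k) $$ (p,q)\<bar> \<le> c * r^k"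
  proof (intro allI impI)
    fix k p q assume p: "p < n" and q: "q < n"
    have "?N ^\<^sub>m k = (complex_of_real (1/r)) ^ k \<cdot>\<^sub>m (?C ^\<^sub>m k)"
      by (rule smult_pow_mat[OF C])
    also have "?C ^\<^sub>m k = map_mat complex_of_real (M ^\<^sub>m k)"
      using map_of_real_pow[OF M] by metis
    finally have eq: "?N ^\<^sub>m k = (complex_of_real (1/r)) ^ k \<cdot>\<^sub>m map_mat complex_of_real (M ^\<^sub>m k)" .
    have Mk: "M ^\<^sub>m k \<in> carrier_mat n n" using M by auto
    have NK: "?N ^\<^sub>m k \<in> carrier_mat n n" using N by (rule pow_carrier_mat)
    from c[of k] have "norm ((?N ^\<^sub>m k) $$ (p,q)) \<le> c" unfolding norm_bound_def using NK p q
      by (metis carrier_matD(1) carrier_matD(2))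
    hence "norm ((complex_of_real (1/r)) ^ k * complex_of_real ((M ^\<^sub>m k) $$ (p,q))) \<le> c"
      unfolding eq using M Mk p q by (simp add: carrier_matD)
    moreover have "cmod (1 / complex_of_real r) = 1/r" using r by (simp add: norm_divide)
    ultimately have "(1/r)^k * \<bar>(M ^\<^sub>m k) $$ (p,q)\<bar> \<le> c" using r by (simp add: norm_mult norm_power)
    hence "r^k * ((1/r)^k * \<bar>(M ^\<^sub>m k) $$ (p,q)\<bar>) \<le> r^k * c" using r by (simp add: mult_left_mono)
    moreover have "r^k * ((1/r)^k * \<bar>(M ^\<^sub>m k) $$ (p,q)\<bar>) = \<bar>(M ^\<^sub>m k) $$ (p,q)\<bar>"
      using r by (simp add: power_one_over field_simps)
    ultimately show "\<bar>(M ^\<^sub>m k) $$ (p,q)\<bar> \<le> c * r^k" by (simp add: mult.commute)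
  qed
  then show ?thesis using r by (intro exI[of _ c] exI[of _ r]) auto
qed

lemma geo_le_zero:
  fixes y K r :: real
  assumes r: "0 \<le> r" "r < 1" and h: "\<And>k. y \<le> K * r^k"
  shows "y \<le> 0"
proof (rule ccontr)
  assume "\<not> y \<le> 0" hence y: "y > 0" by auto
  have K: "K > 0" using h[of 0] y by auto
  obtain k where "r^k < y / K" using real_arch_pow_inv[of "y/K" r] y K r by auto
  hence "K * r^k < y" using K by (simp add: field_simps)
  with h[of k] show False by auto
qed

lemma pow_Suc_entry:
  assumes M: "(M :: 'a :: comm_ring_1 mat) \<in> carrier_mat n n" and p: "p < n" and q: "q < n"
  shows "(M ^\<^sub>m Suc k) $$ (p,q) = (\<Sum>l<n. (M ^\<^sub>m k) $$ (p,l) * M $$ (l,q))"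
proof -
  have Mk: "M ^\<^sub>m k \<in> carrier_mat n n" using M by auto
  show ?thesis using mult_entry[OF Mk M p q] by simp
qed

lemma pow_0_entry:
  assumes M: "M \<in> carrier_mat n n" and p: "p < n" and q: "q < n"
  shows "(M ^\<^sub>m 0) $$ (p,q) = (if p = q then 1 else 0)"
  using assms by auto

lemma pow_nonneg:
  fixes M :: "real mat"
  assumes M: "M \<in> carrier_mat n n" and nn: "\<And>p q. p<n \<Longrightarrow> q<n \<Longrightarrow> M $$ (p,q) \<ge> 0"
  shows "p < n \<Longrightarrow> q < n \<Longrightarrow> (M ^\<^sub>m k) $$ (p,q) \<ge> 0"
proof (induct k arbitrary: p q)
  case 0 then show ?case using M by auto
next
  case (Suc k)
  show ?case unfolding pow_Suc_entry[OF M Suc(2,3)]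
    using Suc nn by (intro sum_nonneg) auto
qed

lemma pow_abs_le:
  fixes M Z :: "real mat"
  assumes M: "M \<in> carrier_mat n n" and Z: "Z \<in> carrier_mat n n"
    and le: "\<And>p q. p<n \<Longrightarrow> q<n \<Longrightarrow> \<bar>Z $$ (p,q)\<bar> \<le> M $$ (p,q)"
  shows "p < n \<Longrightarrow> q < n \<Longrightarrow> \<bar>(Z ^\<^sub>m k) $$ (p,q)\<bar> \<le> (M ^\<^sub>m k) $$ (p,q)"
proof (induct k arbitrary: p q)
  case 0 then show ?case using M Z by auto
next
  case (Suc k)
  have "\<bar>(Z ^\<^sub>m Suc k) $$ (p,q)\<bar> \<le> (\<Sum>l<n. \<bar>(Z ^\<^sub>m k) $$ (p,l) * Z $$ (l,q)\<bar>)"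
    unfolding pow_Suc_entry[OF Z Suc(2,3)] by (rule sum_abs)
  also have "\<dots> \<le> (\<Sum>l<n. (M ^\<^sub>m k) $$ (p,l) * M $$ (l,q))"
  proof (rule sum_mono)
    fix l assume l: "l \<in> {..<n}"
    show "\<bar>(Z ^\<^sub>m k) $$ (p,l) * Z $$ (l,q)\<bar> \<le> (M ^\<^sub>m k) $$ (p,l) * M $$ (l,q)"
      unfolding abs_mult using Suc(1)[OF Suc(2), of l] le[of l q] l Suc(3)
      by (intro mult_mono) auto
  qed
  also have "\<dots> = (M ^\<^sub>m Suc k) $$ (p,q)" unfolding pow_Suc_entry[OF M Suc(2,3)] ..
  finally show ?case .
qed

lemma one_minus_entry:
  assumes M: "M \<in> carrier_mat n n" and p: "p < n" and l: "l < n"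
  shows "(1\<^sub>m n - M) $$ (p,l) = (if p = l then 1 else 0) - M $$ (p,l)"
  using assms by auto

lemma sum_delta_left:
  fixes f :: "nat \<Rightarrow> 'a :: comm_ring_1"
  assumes "p < n"
  shows "(\<Sum>l<n. (if p = l then 1 else 0) * f l) = f p"
proof -
  have "(\<Sum>l<n. (if p = l then 1 else 0) * f l) = (\<Sum>l<n. if p = l then f l else 0)"
    by (rule sum.cong) auto
  also have "\<dots> = f p" using assms by simp
  finally show ?thesis .
qed

lemma one_minus_mult_entry:
  fixes M Y :: "real mat"
  assumes M: "M \<in> carrier_mat n n" and Y: "Y \<in> carrier_mat n k" and p: "p < n" and q: "q < k"
  shows "((1\<^sub>m n - M) * Y) $$ (p,q) = Y $$ (p,q) - (\<Sum>l<n. M $$ (p,l) * Y $$ (l,q))"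
proof -
  have C: "1\<^sub>m n - M \<in> carrier_mat n n" using M by auto
  have "((1\<^sub>m n - M) * Y) $$ (p,q) = (\<Sum>l<n. ((if p = l then 1 else 0) - M $$ (p,l)) * Y $$ (l,q))"
    unfolding mult_entry[OF C Y p q] using one_minus_entry[OF M p] by (intro sum.cong) auto
  also have "\<dots> = (\<Sum>l<n. (if p = l then 1 else 0) * Y $$ (l,q)) - (\<Sum>l<n. M $$ (p,l) * Y $$ (l,q))"
    by (simp add: left_diff_distrib sum_subtractf)
  also have "(\<Sum>l<n. (if p = l then 1 else 0) * Y $$ (l,q)) = Y $$ (p,q)"
    by (rule sum_delta_left[OF p])
  finally show ?thesis .
qed

lemma neumann_ker:
  fixes M :: "real mat"
  assumes M: "M \<in> carrier_mat n n" and rho: "rho M < 1" and n: "n > 0"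
    and v: "v \<in> carrier_vec n" and Mv: "(1\<^sub>m n - M) *\<^sub>v v = 0\<^sub>v n"
  shows "v = 0\<^sub>v n"
proof -
  obtain c r where r: "0 \<le> r" "r < 1"
    and cr: "\<And>k p q. p < n \<Longrightarrow> q < n \<Longrightarrow> \<bar>(M ^\<^sub>m k) $$ (p,q)\<bar> \<le> c * r^k"
    using pow_decay[OF M rho n] by blast
  have C: "1\<^sub>m n - M \<in> carrier_mat n n" using M by auto
  have fix1: "v $ p = (\<Sum>l<n. M $$ (p,l) * v $ l)" if p: "p < n" for p
  proof -
    have "0 = ((1\<^sub>m n - M) *\<^sub>v v) $ p" using Mv p by simp
    also have "\<dots> = (\<Sum>l<n. ((if p = l then 1 else 0) - M $$ (p,l)) * v $ l)"
      unfolding mult_vec_entry[OF C v p] using one_minus_entry[OF M p] by (intro sum.cong) auto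
    also have "\<dots> = (\<Sum>l<n. (if p = l then 1 else 0) * v $ l) - (\<Sum>l<n. M $$ (p,l) * v $ l)"
      by (simp add: left_diff_distrib sum_subtractf)
    also have "(\<Sum>l<n. (if p = l then 1 else 0) * v $ l) = v $ p"
      by (rule sum_delta_left[OF p])
    finally show ?thesis by simp
  qed
  have fixk: "v $ p = (\<Sum>l<n. (M ^\<^sub>m k) $$ (p,l) * v $ l)" if p: "p < n" for k p
    using p
  proof (induct k arbitrary: p)
    case 0
    show ?case using M 0 by (simp add: sum_delta_left)
  next
    case (Suc k)
    have "(\<Sum>l<n. (M ^\<^sub>m Suc k) $$ (p,l) * v $ l)
        = (\<Sum>l<n. \<Sum>s<n. (M ^\<^sub>m k) $$ (p,s) * (M $$ (s,l) * v $ l))"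
    proof (rule sum.cong[OF refl])
      fix l assume "l \<in> {..<n}"
      then show "(M ^\<^sub>m Suc k) $$ (p,l) * v $ l = (\<Sum>s<n. (M ^\<^sub>m k) $$ (p,s) * (M $$ (s,l) * v $ l))"
        using pow_Suc_entry[OF M Suc(2)] by (simp add: sum_distrib_right mult.assoc)
    qed
    also have "\<dots> = (\<Sum>s<n. (M ^\<^sub>m k) $$ (p,s) * (\<Sum>l<n. M $$ (s,l) * v $ l))"
      by (subst sum.swap) (simp add: sum_distrib_left)
    also have "\<dots> = (\<Sum>s<n. (M ^\<^sub>m k) $$ (p,s) * v $ s)"
      by (intro sum.cong refl) (simp add: fix1[symmetric])
    also have "\<dots> = v $ p" using Suc(1)[OF Suc(2)] by simp
    finally show ?case by simp
  qed
  show ?thesis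
  proof (rule eq_vecI)
    show "dim_vec v = dim_vec (0\<^sub>v n)" using v by simp
    fix p assume "p < dim_vec (0\<^sub>v n)" hence p: "p < n" by simp
    have "\<bar>v $ p\<bar> \<le> (c * (\<Sum>l<n. \<bar>v $ l\<bar>)) * r^k" for k
    proof -
      have "\<bar>v $ p\<bar> \<le> (\<Sum>l<n. \<bar>(M ^\<^sub>m k) $$ (p,l) * v $ l\<bar>)"
        unfolding fixk[OF p, of k] by (rule sum_abs)
      also have "\<dots> \<le> (\<Sum>l<n. c * r^k * \<bar>v $ l\<bar>)"
        unfolding abs_mult using cr p by (intro sum_mono mult_right_mono) auto
      also have "\<dots> = (c * r^k) * (\<Sum>l<n. \<bar>v $ l\<bar>)"
        by (rule sum_distrib_left[symmetric])
      also have "\<dots> = (c * (\<Sum>l<n. \<bar>v $ l\<bar>)) * r^k"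
        by (simp only: ac_simps)
      finally show ?thesis .
    qed
    from geo_le_zero[OF r this] show "v $ p = 0\<^sub>v n $ p" using p by simp
  qed
qed

lemma neumann:
  fixes M :: "real mat"
  assumes M: "M \<in> carrier_mat n n" and nn: "\<And>p q. p<n \<Longrightarrow> q<n \<Longrightarrow> M $$ (p,q) \<ge> 0"
    and rho: "rho M < 1" and n: "n > 0"
  shows "inv_mat (1\<^sub>m n - M) \<in> carrier_mat n n \<and> (1\<^sub>m n - M) * inv_mat (1\<^sub>m n - M) = 1\<^sub>m n
          \<and> inv_mat (1\<^sub>m n - M) * (1\<^sub>m n - M) = 1\<^sub>m n"
    and "\<And>p q. p<n \<Longrightarrow> q<n \<Longrightarrow> (\<Sum>t<T. (M ^\<^sub>m t) $$ (p,q)) \<le> inv_mat (1\<^sub>m n - M) $$ (p,q)"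
proof -
  have C: "1\<^sub>m n - M \<in> carrier_mat n n" using M by auto
  show inv: "inv_mat (1\<^sub>m n - M) \<in> carrier_mat n n \<and> (1\<^sub>m n - M) * inv_mat (1\<^sub>m n - M) = 1\<^sub>m n
          \<and> inv_mat (1\<^sub>m n - M) * (1\<^sub>m n - M) = 1\<^sub>m n"
    by (rule inv_mat_ex[OF C neumann_ker[OF M rho n]])
  define Y where "Y = inv_mat (1\<^sub>m n - M)"
  have Y: "Y \<in> carrier_mat n n" and CY: "(1\<^sub>m n - M) * Y = 1\<^sub>m n" using inv unfolding Y_def by auto
  obtain c r where r: "0 \<le> r" "r < 1"
    and cr: "\<And>k p q. p < n \<Longrightarrow> q < n \<Longrightarrow> \<bar>(M ^\<^sub>m k) $$ (p,q)\<bar> \<le> c * r^k"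
    using pow_decay[OF M rho n] by blast
  have Yeq: "Y $$ (p,q) = (if p = q then 1 else 0) + (\<Sum>l<n. M $$ (p,l) * Y $$ (l,q))"
    if p: "p < n" and q: "q < n" for p q
  proof -
    have "(if p = q then 1 else 0) = ((1\<^sub>m n - M) * Y) $$ (p,q)" unfolding CY using p q by simp
    also have "\<dots> = Y $$ (p,q) - (\<Sum>l<n. M $$ (p,l) * Y $$ (l,q))"
      by (rule one_minus_mult_entry[OF M Y p q])
    finally show ?thesis by simp
  qed
  have expand: "Y $$ (p,q) = (\<Sum>t<k. (M ^\<^sub>m t) $$ (p,q)) + (\<Sum>l<n. (M ^\<^sub>m k) $$ (p,l) * Y $$ (l,q))"
    if p: "p < n" and q: "q < n" for k p q
  proof (induct k)
    case 0
    show ?case using M p by (simp add: sum_delta_left)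
  next
    case (Suc k)
    have "(\<Sum>l<n. (M ^\<^sub>m k) $$ (p,l) * Y $$ (l,q))
       = (\<Sum>l<n. (M ^\<^sub>m k) $$ (p,l) * ((if l = q then 1 else 0) + (\<Sum>s<n. M $$ (l,s) * Y $$ (s,q))))"
    proof (rule sum.cong[OF refl])
      fix l assume "l \<in> {..<n}" hence l: "l < n" by simp
      have e: "Y $$ (l,q) = (if l = q then 1 else 0) + (\<Sum>s<n. M $$ (l,s) * Y $$ (s,q))"
        by (rule Yeq[OF l q])
      show "(M ^\<^sub>m k) $$ (p,l) * Y $$ (l,q) = (M ^\<^sub>m k) $$ (p,l) * ((if l = q then 1 else 0) + (\<Sum>s<n. M $$ (l,s) * Y $$ (s,q)))"
        by (subst e) (rule refl)
    qed
    also have "\<dots> = (\<Sum>l<n. (M ^\<^sub>m k) $$ (p,l) * (if l = q then 1 else 0))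
        + (\<Sum>l<n. \<Sum>s<n. (M ^\<^sub>m k) $$ (p,l) * M $$ (l,s) * Y $$ (s,q))"
      by (simp add: distrib_left sum.distrib sum_distrib_left mult.assoc)
    also have "(\<Sum>l<n. (M ^\<^sub>m k) $$ (p,l) * (if l = q then 1 else 0)) = (M ^\<^sub>m k) $$ (p,q)"
    proof -
      have "(\<Sum>l<n. (M ^\<^sub>m k) $$ (p,l) * (if l = q then 1 else 0)) = (\<Sum>l<n. if l = q then (M ^\<^sub>m k) $$ (p,l) else 0)"
        by (rule sum.cong) auto
      also have "\<dots> = (M ^\<^sub>m k) $$ (p,q)" using q by (simp add: sum.delta')
      finally show ?thesis .
    qed
    also have "(\<Sum>l<n. \<Sum>s<n. (M ^\<^sub>m k) $$ (p,l) * M $$ (l,s) * Y $$ (s,q))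
       = (\<Sum>s<n. (\<Sum>l<n. (M ^\<^sub>m k) $$ (p,l) * M $$ (l,s)) * Y $$ (s,q))"
      by (subst sum.swap) (simp add: sum_distrib_right)
    also have "\<dots> = (\<Sum>s<n. (M ^\<^sub>m Suc k) $$ (p,s) * Y $$ (s,q))"
      by (intro sum.cong refl) (simp add: pow_Suc_entry[OF M p] del: pow_mat.simps)
    finally have "(\<Sum>l<n. (M ^\<^sub>m k) $$ (p,l) * Y $$ (l,q)) = (M ^\<^sub>m k) $$ (p,q) + (\<Sum>s<n. (M ^\<^sub>m Suc k) $$ (p,s) * Y $$ (s,q))" .
    moreover have "(\<Sum>t<Suc k. (M ^\<^sub>m t) $$ (p,q)) = (\<Sum>t<k. (M ^\<^sub>m t) $$ (p,q)) + (M ^\<^sub>m k) $$ (p,q)" by simp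
    ultimately show ?case using Suc by linarith
  qed
  have Ynn: "Y $$ (p,q) \<ge> 0" if p: "p < n" and q: "q < n" for p q
  proof -
    have "- Y $$ (p,q) \<le> (c * (\<Sum>l<n. \<bar>Y $$ (l,q)\<bar>)) * r^k" for k
    proof -
      have "0 \<le> (\<Sum>t<k. (M ^\<^sub>m t) $$ (p,q))"
        using pow_nonneg[OF M nn p q] by (intro sum_nonneg) auto
      hence "- Y $$ (p,q) \<le> - (\<Sum>l<n. (M ^\<^sub>m k) $$ (p,l) * Y $$ (l,q))"
        using expand[OF p q, of k] by linarith
      also have "\<dots> \<le> \<bar>\<Sum>l<n. (M ^\<^sub>m k) $$ (p,l) * Y $$ (l,q)\<bar>" by linarith
      also have "\<dots> \<le> (\<Sum>l<n. \<bar>(M ^\<^sub>m k) $$ (p,l) * Y $$ (l,q)\<bar>)" by (rule sum_abs)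
      also have "\<dots> \<le> (\<Sum>l<n. c * r^k * \<bar>Y $$ (l,q)\<bar>)"
        unfolding abs_mult using cr p by (intro sum_mono mult_right_mono) auto
      also have "\<dots> = (c * r^k) * (\<Sum>l<n. \<bar>Y $$ (l,q)\<bar>)"
        by (rule sum_distrib_left[symmetric])
      also have "\<dots> = (c * (\<Sum>l<n. \<bar>Y $$ (l,q)\<bar>)) * r^k"
        by (simp only: ac_simps)
      finally show ?thesis .
    qed
    from geo_le_zero[OF r this] show ?thesis by simp
  qed
  fix p q assume p: "p < n" and q: "q < n"
  have "0 \<le> (\<Sum>l<n. (M ^\<^sub>m T) $$ (p,l) * Y $$ (l,q))"
    using pow_nonneg[OF M nn p] Ynn[OF _ q] by (intro sum_nonneg) auto
  then show "(\<Sum>t<T. (M ^\<^sub>m t) $$ (p,q)) \<le> inv_mat (1\<^sub>m n - M) $$ (p,q)"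
    using expand[OF p q, of T] unfolding Y_def by linarith
qed

lemma abs_mat_carrier[simp]: "abs_mat B \<in> carrier_mat (dim_row B) (dim_col B)"
  unfolding abs_mat_def by auto

lemma abs_mat_entry: "p < dim_row B \<Longrightarrow> q < dim_col B \<Longrightarrow> abs_mat B $$ (p,q) = \<bar>B $$ (p,q)\<bar>"
  unfolding abs_mat_def by auto

lemma abs_mat_dims[simp]: "dim_row (abs_mat B) = dim_row B" "dim_col (abs_mat B) = dim_col B"
  unfolding abs_mat_def by auto

lemma diag_PQ:
  fixes P Q :: "real mat"
  assumes P: "P \<in> carrier_mat a b" and Q: "Q \<in> carrier_mat b c" and k: "k < a"
  shows "(P * Q * Q\<^sup>T * P\<^sup>T) $$ (k,k) = (\<Sum>l<c. ((P * Q) $$ (k,l))^2)"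
proof -
  have G: "P * Q \<in> carrier_mat a c" using P Q by auto
  have GT: "(P * Q)\<^sup>T \<in> carrier_mat c a" using G by auto
  have "P * Q * Q\<^sup>T * P\<^sup>T = (P * Q) * (Q\<^sup>T * P\<^sup>T)"
    using P Q by (intro assoc_mult_mat) auto
  also have "Q\<^sup>T * P\<^sup>T = (P * Q)\<^sup>T" using transpose_mult[OF P Q] by simp
  finally have e: "P * Q * Q\<^sup>T * P\<^sup>T = (P * Q) * (P * Q)\<^sup>T" .
  show ?thesis unfolding e mult_entry[OF G GT k k]
    using G P Q k by (intro sum.cong refl) (auto simp: power2_eq_square)
qed

lemma gramian_Suc: "gramian Z B (Suc T) = gramian Z B T + (Z ^\<^sub>m T) * B * B\<^sup>T * (Z ^\<^sub>m T)\<^sup>T"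
  unfolding gramian_def by simp

lemma gramian_carrier:
  assumes Z: "Z \<in> carrier_mat n n" and B: "B \<in> carrier_mat n m"
  shows "gramian Z B T \<in> carrier_mat n n"
proof (induct T)
  case 0 then show ?case using Z unfolding gramian_def by auto
next
  case (Suc T) then show ?case unfolding gramian_Suc using Z B by auto
qed

lemma gramian_diag:
  fixes Z B :: "real mat"
  assumes Z: "Z \<in> carrier_mat n n" and B: "B \<in> carrier_mat n m" and k: "k < n"
  shows "gramian Z B T $$ (k,k) = (\<Sum>t<T. \<Sum>l<m. ((Z ^\<^sub>m t * B) $$ (k,l))^2)"
proof (induct T)
  case 0 then show ?case using Z k unfolding gramian_def by auto
next
  case (Suc T)
  have Zt: "Z ^\<^sub>m T \<in> carrier_mat n n" using Z by auto
  have "gramian Z B (Suc T) $$ (k,k) = gramian Z B T $$ (k,k) + ((Z ^\<^sub>m T) * B * B\<^sup>T * (Z ^\<^sub>m T)\<^sup>T) $$ (k,k)"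
    unfolding gramian_Suc by (rule index_add_mat(1)) (use Z B k in auto)
  also have "((Z ^\<^sub>m T) * B * B\<^sup>T * (Z ^\<^sub>m T)\<^sup>T) $$ (k,k) = (\<Sum>l<m. ((Z ^\<^sub>m T * B) $$ (k,l))^2)"
    by (rule diag_PQ[OF Zt B k])
  finally show ?case using Suc by simp
qed

lemma trace_gramian:
  fixes Z B :: "real mat"
  assumes Z: "Z \<in> carrier_mat n n" and B: "B \<in> carrier_mat n m"
  shows "trace_mat (gramian Z B T) = (\<Sum>k<n. \<Sum>t<T. \<Sum>l<m. ((Z ^\<^sub>m t * B) $$ (k,l))^2)"
  unfolding trace_mat_def using gramian_carrier[OF Z B, of T] gramian_diag[OF Z B]
  by (intro sum.cong) auto

lemma sum_sq_le_sq_sum: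
  fixes a :: "nat \<Rightarrow> real"
  assumes "\<And>t. a t \<ge> 0"
  shows "(\<Sum>t<T. (a t)^2) \<le> (\<Sum>t<T. a t)^2"
proof (induct T)
  case 0 then show ?case by simp
next
  case (Suc T)
  have "0 \<le> (\<Sum>t<T. a t)" using assms by (intro sum_nonneg) auto
  hence h: "0 \<le> 2 * (\<Sum>t<T. a t) * a T" using assms[of T] by simp
  have e1: "(\<Sum>t<Suc T. (a t)^2) = (\<Sum>t<T. (a t)^2) + (a T)^2" by simp
  have e2: "(\<Sum>t<Suc T. a t)^2 = (\<Sum>t<T. a t)^2 + 2 * (\<Sum>t<T. a t) * a T + (a T)^2"
    by (simp add: power2_sum)
  show ?case unfolding e1 e2 using Suc h by linarith
qed

lemma gram_bound:
  fixes Z M B Y :: "real mat"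
  assumes Z: "Z \<in> carrier_mat n n" and M: "M \<in> carrier_mat n n" and B: "B \<in> carrier_mat n m"
    and Y: "Y \<in> carrier_mat n n"
    and Zle: "\<And>p q. p<n \<Longrightarrow> q<n \<Longrightarrow> \<bar>Z $$ (p,q)\<bar> \<le> M $$ (p,q)"
    and Ysum: "\<And>p q. p<n \<Longrightarrow> q<n \<Longrightarrow> (\<Sum>t<T. (M ^\<^sub>m t) $$ (p,q)) \<le> Y $$ (p,q)"
  shows "trace_mat (gramian Z B T) \<le> (\<Sum>k<n. \<Sum>l<m. ((Y * abs_mat B) $$ (k,l))^2)"
proof -
  have aB: "abs_mat B \<in> carrier_mat n m" using B abs_mat_carrier[of B] by auto
  have Mnn: "M $$ (p,q) \<ge> 0" if "p<n" "q<n" for p q using Zle[OF that] by linarith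
  have main: "(\<Sum>t<T. ((Z ^\<^sub>m t * B) $$ (k,l))^2) \<le> ((Y * abs_mat B) $$ (k,l))^2"
    if k: "k < n" and l: "l < m" for k l
  proof -
    define a where "a t = (\<Sum>q<n. (M ^\<^sub>m t) $$ (k,q) * \<bar>B $$ (q,l)\<bar>)" for t
    have a0: "a t \<ge> 0" for t unfolding a_def
      using pow_nonneg[OF M Mnn k] by (intro sum_nonneg) auto
    have le1: "((Z ^\<^sub>m t * B) $$ (k,l))^2 \<le> (a t)^2" for t
    proof -
      have Zt: "Z ^\<^sub>m t \<in> carrier_mat n n" using Z by auto
      have "\<bar>(Z ^\<^sub>m t * B) $$ (k,l)\<bar> \<le> (\<Sum>q<n. \<bar>(Z ^\<^sub>m t) $$ (k,q) * B $$ (q,l)\<bar>)"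
        unfolding mult_entry[OF Zt B k l] by (rule sum_abs)
      also have "\<dots> \<le> a t" unfolding a_def abs_mult
        using pow_abs_le[OF M Z Zle k] by (intro sum_mono mult_right_mono) auto
      finally have "\<bar>(Z ^\<^sub>m t * B) $$ (k,l)\<bar> \<le> a t" .
      then show ?thesis using power_mono[of "\<bar>(Z ^\<^sub>m t * B) $$ (k,l)\<bar>" "a t" 2] by simp
    qed
    have s1: "(\<Sum>t<T. ((Z ^\<^sub>m t * B) $$ (k,l))^2) \<le> (\<Sum>t<T. (a t)^2)" by (intro sum_mono le1)
    also have "\<dots> \<le> (\<Sum>t<T. a t)^2" by (rule sum_sq_le_sq_sum[OF a0])
    finally have s2: "(\<Sum>t<T. ((Z ^\<^sub>m t * B) $$ (k,l))^2) \<le> (\<Sum>t<T. a t)^2" .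
    have "(\<Sum>t<T. a t) = (\<Sum>q<n. (\<Sum>t<T. (M ^\<^sub>m t) $$ (k,q)) * \<bar>B $$ (q,l)\<bar>)"
      unfolding a_def by (subst sum.swap) (simp add: sum_distrib_right)
    also have "\<dots> \<le> (\<Sum>q<n. Y $$ (k,q) * abs_mat B $$ (q,l))"
      using Ysum[OF k] B l by (intro sum_mono) (auto simp: abs_mat_entry intro!: mult_right_mono)
    also have "\<dots> = (Y * abs_mat B) $$ (k,l)" by (rule mult_entry[OF Y aB k l, symmetric])
    finally have s3: "(\<Sum>t<T. a t) \<le> (Y * abs_mat B) $$ (k,l)" .
    have "0 \<le> (\<Sum>t<T. a t)" using a0 by (intro sum_nonneg) auto
    from power_mono[OF s3 this, of 2] s2 show ?thesis by linarith
  qed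
  have "trace_mat (gramian Z B T) = (\<Sum>k<n. \<Sum>l<m. \<Sum>t<T. ((Z ^\<^sub>m t * B) $$ (k,l))^2)"
    unfolding trace_gramian[OF Z B] by (rule sum.cong[OF refl], rule sum.swap)
  also have "\<dots> \<le> (\<Sum>k<n. \<Sum>l<m. ((Y * abs_mat B) $$ (k,l))^2)"
    using main by (intro sum_mono) auto
  finally show ?thesis .
qed

lemma sum_delta_right:
  fixes f :: "nat \<Rightarrow> 'a :: comm_ring_1"
  assumes "k < n"
  shows "(\<Sum>q<n. f q * (if q = k then 1 else 0)) = f k"
proof -
  have "(\<Sum>q<n. f q * (if q = k then 1 else 0)) = (\<Sum>q<n. if q = k then f q else 0)"
    by (rule sum.cong) auto
  also have "\<dots> = f k" using assms by (simp add: sum.delta')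
  finally show ?thesis .
qed

lemma sum_delta_left2:
  fixes f :: "nat \<Rightarrow> 'a :: comm_ring_1"
  assumes "k < n"
  shows "(\<Sum>q<n. (if q = k then 1 else 0) * f q) = f k"
proof -
  have "(\<Sum>q<n. (if q = k then 1 else 0) * f q) = (\<Sum>q<n. if q = k then f q else 0)"
    by (rule sum.cong) auto
  also have "\<dots> = f k" using assms by (simp add: sum.delta')
  finally show ?thesis .
qed

lemma qf_nonneg:
  fixes W :: "real mat"
  assumes pd: "pos_def_mat W" and W: "W \<in> carrier_mat n n"
  shows "(\<Sum>p<n. f p * (\<Sum>q<n. W $$ (p,q) * f q)) \<ge> 0"
    and "k < n \<Longrightarrow> f k \<noteq> 0 \<Longrightarrow> (\<Sum>p<n. f p * (\<Sum>q<n. W $$ (p,q) * f q)) > 0"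
proof -
  define x where "x = vec n f"
  have x: "x \<in> carrier_vec n" unfolding x_def by auto
  have "x \<bullet> (W *\<^sub>v x) = (\<Sum>p<n. x $ p * (W *\<^sub>v x) $ p)"
    unfolding scalar_prod_def using W by (simp add: lessThan_atLeast0)
  also have "\<dots> = (\<Sum>p<n. f p * (\<Sum>q<n. W $$ (p,q) * f q))"
  proof (rule sum.cong[OF refl])
    fix p assume "p \<in> {..<n}" hence p: "p < n" by simp
    have "(W *\<^sub>v x) $ p = (\<Sum>q<n. W $$ (p,q) * x $ q)" by (rule mult_vec_entry[OF W x p])
    also have "\<dots> = (\<Sum>q<n. W $$ (p,q) * f q)" unfolding x_def by (intro sum.cong refl) simp
    finally show "x $ p * (W *\<^sub>v x) $ p = f p * (\<Sum>q<n. W $$ (p,q) * f q)" using p unfolding x_def by simp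
  qed
  finally have e: "x \<bullet> (W *\<^sub>v x) = (\<Sum>p<n. f p * (\<Sum>q<n. W $$ (p,q) * f q))" .
  have dr: "dim_row W = n" using W by auto
  have pos: "x \<noteq> 0\<^sub>v n \<Longrightarrow> x \<bullet> (W *\<^sub>v x) > 0" using pd x unfolding pos_def_mat_def dr by auto
  show "(\<Sum>p<n. f p * (\<Sum>q<n. W $$ (p,q) * f q)) \<ge> 0"
  proof (cases "x = 0\<^sub>v n")
    case True then show ?thesis unfolding e[symmetric] using W by simp
  next
    case False then show ?thesis using pos e by auto
  qed
  assume k: "k < n" and fk: "f k \<noteq> 0"
  have "x \<noteq> 0\<^sub>v n"
  proof
    assume "x = 0\<^sub>v n"
    hence "x $ k = 0" using k by simp
    thus False using fk k unfolding x_def by simp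
  qed
  then show "(\<Sum>p<n. f p * (\<Sum>q<n. W $$ (p,q) * f q)) > 0" using pos e by auto
qed

lemma trace_inv_bound:
  fixes W :: "real mat"
  assumes pd: "pos_def_mat W" and W: "W \<in> carrier_mat n n" and n: "n > 0"
  shows "trace_mat W > 0" and "trace_mat (inv_mat W) * trace_mat W \<ge> (real n)^2"
proof -
  have dr: "dim_row W = n" using W by auto
  have sym: "W $$ (p,q) = W $$ (q,p)" if "p < n" "q < n" for p q
  proof -
    have "W\<^sup>T = W" using pd unfolding pos_def_mat_def by auto
    hence "W\<^sup>T $$ (q,p) = W $$ (q,p)" by simp
    thus ?thesis using that W by auto
  qed
  have diag: "W $$ (k,k) > 0" if k: "k < n" for k
  proof -
    have "(\<Sum>p<n. (if p = k then 1 else 0) * (\<Sum>q<n. W $$ (p,q) * (if q = k then 1 else 0))) > (0::real)"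
      by (rule qf_nonneg(2)[OF pd W k]) simp
    also have "(\<Sum>p<n. (if p = k then 1 else 0) * (\<Sum>q<n. W $$ (p,q) * (if q = k then 1 else 0)))
       = (\<Sum>p<n. (if p = k then 1 else 0) * W $$ (p,k))"
    proof (rule sum.cong[OF refl])
      fix p
      have "(\<Sum>q<n. W $$ (p,q) * (if q = k then 1 else 0)) = W $$ (p,k)" by (rule sum_delta_right[OF k])
      then show "(if p = k then 1 else 0) * (\<Sum>q<n. W $$ (p,q) * (if q = k then 1 else 0)) = (if p = k then 1 else 0) * W $$ (p,k)"
        by simp
    qed
    also have "\<dots> = W $$ (k,k)" by (rule sum_delta_left2[OF k])
    finally show ?thesis .
  qed
  show trpos: "trace_mat W > 0" unfolding trace_mat_def dr
    using diag n by (intro sum_pos) auto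
  have ker: "v = 0\<^sub>v n" if v: "v \<in> carrier_vec n" and Wv: "W *\<^sub>v v = 0\<^sub>v n" for v
  proof (rule ccontr)
    assume "v \<noteq> 0\<^sub>v n"
    hence "v \<bullet> (W *\<^sub>v v) > 0" using pd v unfolding pos_def_mat_def dr by auto
    thus False unfolding Wv using v by simp
  qed
  have inv: "inv_mat W \<in> carrier_mat n n \<and> W * inv_mat W = 1\<^sub>m n \<and> inv_mat W * W = 1\<^sub>m n"
    by (rule inv_mat_ex[OF W ker])
  define V where "V = inv_mat W"
  have V: "V \<in> carrier_mat n n" and WV: "W * V = 1\<^sub>m n" using inv unfolding V_def by auto
  have WVe: "(\<Sum>q<n. W $$ (p,q) * V $$ (q,k)) = (if p = k then 1 else 0)" if "p < n" "k < n" for p k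
    using mult_entry[OF W V that] WV that by simp
  have perk: "0 \<le> a^2 * V $$ (k,k) - 2 * a * b + b^2 * W $$ (k,k)" if k: "k < n" for a b k
  proof -
    define f where "f p = a * V $$ (p,k) - b * (if p = k then 1 else 0)" for p
    have g: "(\<Sum>q<n. W $$ (p,q) * f q) = a * (if p = k then 1 else 0) - b * W $$ (p,k)" if p: "p < n" for p
    proof -
      have "(\<Sum>q<n. W $$ (p,q) * f q) = a * (\<Sum>q<n. W $$ (p,q) * V $$ (q,k)) - b * (\<Sum>q<n. W $$ (p,q) * (if q = k then 1 else 0))"
        unfolding f_def by (simp add: right_diff_distrib sum_subtractf sum_distrib_left ac_simps)
      also have "\<dots> = a * (if p = k then 1 else 0) - b * W $$ (p,k)"
        unfolding WVe[OF p k] sum_delta_right[OF k] ..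
      finally show ?thesis .
    qed
    have "0 \<le> (\<Sum>p<n. f p * (\<Sum>q<n. W $$ (p,q) * f q))" by (rule qf_nonneg(1)[OF pd W])
    also have "\<dots> = (\<Sum>p<n. (- a * b) * (W $$ (k,p) * V $$ (p,k))
          + (if p = k then 1 else 0) * (a^2 * V $$ (p,k) - a * b + b^2 * W $$ (p,k)))"
    proof (rule sum.cong[OF refl])
      fix p assume "p \<in> {..<n}" hence p: "p < n" by simp
      show "f p * (\<Sum>q<n. W $$ (p,q) * f q) = (- a * b) * (W $$ (k,p) * V $$ (p,k))
          + (if p = k then 1 else 0) * (a^2 * V $$ (p,k) - a * b + b^2 * W $$ (p,k))"
        unfolding g[OF p] unfolding f_def sym[OF k p]
        by (cases "p = k") (auto simp: algebra_simps power2_eq_square)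
    qed
    also have "\<dots> = (- a * b) * (\<Sum>p<n. W $$ (k,p) * V $$ (p,k))
          + (\<Sum>p<n. (if p = k then 1 else 0) * (a^2 * V $$ (p,k) - a * b + b^2 * W $$ (p,k)))"
      by (simp only: sum.distrib sum_distrib_left)
    also have "(\<Sum>p<n. W $$ (k,p) * V $$ (p,k)) = 1" using WVe[OF k k] by simp
    also have "(\<Sum>p<n. (if p = k then 1 else 0) * (a^2 * V $$ (p,k) - a * b + b^2 * W $$ (p,k)))
        = a^2 * V $$ (k,k) - a * b + b^2 * W $$ (k,k)"
      by (rule sum_delta_left2[OF k])
    finally show ?thesis by simp
  qed
  define a where "a = trace_mat W"
  define b where "b = real n"
  have trV: "trace_mat V = (\<Sum>k<n. V $$ (k,k))" unfolding trace_mat_def using V by auto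
  have trW: "a = (\<Sum>k<n. W $$ (k,k))" unfolding a_def trace_mat_def dr ..
  have "0 \<le> (\<Sum>k<n. a^2 * V $$ (k,k) - 2 * a * b + b^2 * W $$ (k,k))"
    using perk by (intro sum_nonneg) auto
  also have "\<dots> = a^2 * trace_mat V - 2 * a * b * real n + b^2 * a"
    unfolding trV trW by (simp add: sum.distrib sum_subtractf sum_distrib_left)
  also have "\<dots> = a * (a * trace_mat V - b^2)" unfolding b_def by (simp add: algebra_simps power2_eq_square)
  finally have "0 \<le> a * (a * trace_mat V - b^2)" .
  moreover have "a > 0" unfolding a_def by (rule trpos)
  ultimately have "0 \<le> a * trace_mat V - b^2" by (simp add: zero_le_mult_iff)
  then show "trace_mat (inv_mat W) * trace_mat W \<ge> (real n)^2"
    unfolding V_def[symmetric] a_def[symmetric] b_def[symmetric] by (simp add: mult.commute)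
qed

lemma my_cs:
  fixes f h :: "nat \<Rightarrow> real"
  shows "(\<Sum>k\<in>K. f k * h k)^2 \<le> (\<Sum>k\<in>K. (f k)^2) * (\<Sum>k\<in>K. (h k)^2)"
proof -
  let ?A = "\<Sum>k\<in>K. (f k)^2" and ?B = "\<Sum>k\<in>K. (h k)^2" and ?C = "\<Sum>k\<in>K. f k * h k"
  have "0 \<le> (\<Sum>i\<in>K. \<Sum>j\<in>K. (f i * h j - f j * h i)^2)" by (intro sum_nonneg) auto
  also have "\<dots> = (\<Sum>i\<in>K. \<Sum>j\<in>K. (f i)^2 * (h j)^2) + (\<Sum>i\<in>K. \<Sum>j\<in>K. (h i)^2 * (f j)^2)
      - 2 * (\<Sum>i\<in>K. \<Sum>j\<in>K. (f i * h i) * (f j * h j))"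
    by (simp add: sum.distrib sum_subtractf sum_distrib_left power2_eq_square algebra_simps)
  also have "\<dots> = 2 * (?A * ?B - ?C^2)"
    unfolding sum_product[symmetric] power2_eq_square by (simp add: algebra_simps)
  finally show ?thesis by simp
qed


lemma alg_key:
  fixes g s a0 b R :: real
  assumes g: "g \<ge> 0" and s: "s \<ge> 0" and a0: "a0 \<ge> 0" and b: "b \<ge> 0"
    and R: "R = sqrt (g^2 + s^2)"
  shows "a0 * (g * a0 + s * b) \<le> (g + R) / 2 * (a0^2 + b^2)"
proof -
  have R0: "R \<ge> 0" unfolding R by simp
  have R2: "R^2 = g^2 + s^2" unfolding R by simp
  have Rg: "R \<ge> g" unfolding R using g by (simp add: real_le_rsqrt)
  show ?thesis
  proof (cases "R + g = 0")
    case True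
    hence "g = 0" "R = 0" using g R0 by auto
    hence "s = 0" using R2 s by simp
    then show ?thesis using \<open>g = 0\<close> \<open>R = 0\<close> by simp
  next
    case False
    hence pos: "R + g > 0" using g R0 by linarith
    have sq: "0 \<le> (s * a0 - (R + g) * b)^2" by simp
    have ss: "s^2 = (R - g) * (R + g)" using R2 by (simp add: algebra_simps power2_eq_square)
    have id: "(R + g) * ((R - g) * a0^2 + (R + g) * b^2) - (R + g) * (2 * s * a0 * b)
        - (s * a0 - (R + g) * b)^2 = (R^2 - g^2 - s^2) * a0^2" by (simp add: power2_eq_square algebra_simps)
    have id2: "(R + g) * ((R - g) * a0^2 + (R + g) * b^2) - (R + g) * (2 * s * a0 * b)
        = (s * a0 - (R + g) * b)^2" using id R2 by simp
    have "(R + g) * (2 * s * a0 * b) \<le> (R + g) * ((R - g) * a0^2 + (R + g) * b^2)"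
      using sq id2 by linarith
    hence "2 * s * a0 * b \<le> (R - g) * a0^2 + (R + g) * b^2"
      using pos by (simp add: mult_le_cancel_left_pos)
    then show ?thesis by (simp add: algebra_simps power2_eq_square)
  qed
qed

lemma cs_sqrt:
  fixes f h :: "nat \<Rightarrow> real"
  shows "(\<Sum>k\<in>K. f k * h k) \<le> sqrt (\<Sum>k\<in>K. (f k)^2) * sqrt (\<Sum>k\<in>K. (h k)^2)"
proof -
  have "(\<Sum>k\<in>K. f k * h k) \<le> sqrt ((\<Sum>k\<in>K. f k * h k)^2)" by simp
  also have "\<dots> \<le> sqrt ((\<Sum>k\<in>K. (f k)^2) * (\<Sum>k\<in>K. (h k)^2))"
    by (rule real_sqrt_le_mono[OF my_cs])
  also have "\<dots> = sqrt (\<Sum>k\<in>K. (f k)^2) * sqrt (\<Sum>k\<in>K. (h k)^2)" by (simp add: real_sqrt_mult)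
  finally show ?thesis .
qed

lemma mid_bound:
  fixes u :: "nat \<Rightarrow> real" and G :: "nat \<Rightarrow> nat \<Rightarrow> real"
  assumes i: "i < n" and u: "\<And>k. k < n \<Longrightarrow> u k \<ge> 0"
  shows "(\<Sum>k<n. u k * (\<Sum>l<m. G k l * G i l))
     \<le> (u i + sqrt (\<Sum>k<n. (u k)^2)) / 2 * (\<Sum>k<n. \<Sum>l<m. (G k l)^2)"
proof -
  define x where "x k = sqrt (\<Sum>l<m. (G k l)^2)" for k
  have x0: "x k \<ge> 0" for k unfolding x_def by (intro real_sqrt_ge_zero sum_nonneg) simp
  have x2: "(x k)^2 = (\<Sum>l<m. (G k l)^2)" for k unfolding x_def by (rule real_sqrt_pow2, rule sum_nonneg) simp
  define K where "K = {..<n} - {i}"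
  have fin: "finite K" unfolding K_def by simp
  have split: "(\<Sum>k<n. f k) = f i + (\<Sum>k\<in>K. f k)" for f :: "nat \<Rightarrow> real"
    unfolding K_def using i by (simp add: sum.remove)
  define s where "s = sqrt (\<Sum>k\<in>K. (u k)^2)"
  define b where "b = sqrt (\<Sum>k\<in>K. (x k)^2)"
  have "(\<Sum>k<n. u k * (\<Sum>l<m. G k l * G i l)) \<le> (\<Sum>k<n. u k * (x k * x i))"
  proof (rule sum_mono)
    fix k assume "k \<in> {..<n}"
    hence uk: "u k \<ge> 0" using u by auto
    have le: "(\<Sum>l<m. G k l * G i l) \<le> x k * x i" unfolding x_def by (rule cs_sqrt)
    show "u k * (\<Sum>l<m. G k l * G i l) \<le> u k * (x k * x i)" by (rule mult_left_mono[OF le uk])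
  qed
  also have "\<dots> = x i * (u i * x i + (\<Sum>k\<in>K. u k * x k))"
    unfolding split by (simp add: sum_distrib_left algebra_simps)
  also have "\<dots> \<le> x i * (u i * x i + s * b)"
    unfolding s_def b_def using x0[of i] by (intro mult_left_mono add_left_mono cs_sqrt)
  also have "\<dots> \<le> (u i + sqrt ((u i)^2 + s^2)) / 2 * ((x i)^2 + b^2)"
    by (rule alg_key) (auto simp: s_def b_def x0 u i intro!: real_sqrt_ge_zero sum_nonneg)
  also have "(u i)^2 + s^2 = (\<Sum>k<n. (u k)^2)" unfolding split s_def by (subst real_sqrt_pow2) (auto intro!: sum_nonneg)
  also have "(x i)^2 + b^2 = (\<Sum>k<n. \<Sum>l<m. (G k l)^2)"
  proof -
    have "b^2 = (\<Sum>k\<in>K. (x k)^2)" unfolding b_def by (subst real_sqrt_pow2) (auto intro!: sum_nonneg)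
    hence "(x i)^2 + b^2 = (\<Sum>k<n. (x k)^2)" using split[of "\<lambda>k. (x k)^2"] by simp
    then show ?thesis unfolding x2 .
  qed
  finally show ?thesis .
qed

lemma uo_entry:
  assumes "p < n" "q < n" "j < n" "i < n"
  shows "unit_outer n j i $$ (p,q) = (if p = j \<and> q = i then 1 else 0)"
  using assms by (simp add: unit_outer_def scalar_prod_def mat_of_cols_index mat_of_rows_index)

lemma uo_carrier: "unit_outer n j i \<in> carrier_mat n n"
  unfolding unit_outer_def by auto

lemma one_minus_vec_entry:
  fixes M :: "real mat"
  assumes M: "M \<in> carrier_mat n n" and v: "v \<in> carrier_vec n" and p: "p < n"
  shows "((1\<^sub>m n - M) *\<^sub>v v) $ p = v $ p - (\<Sum>l<n. M $$ (p,l) * v $ l)"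
proof -
  have C: "1\<^sub>m n - M \<in> carrier_mat n n" using M by auto
  have "((1\<^sub>m n - M) *\<^sub>v v) $ p = (\<Sum>l<n. ((if p = l then 1 else 0) - M $$ (p,l)) * v $ l)"
    unfolding mult_vec_entry[OF C v p] using one_minus_entry[OF M p] by (intro sum.cong) auto
  also have "\<dots> = (\<Sum>l<n. (if p = l then 1 else 0) * v $ l) - (\<Sum>l<n. M $$ (p,l) * v $ l)"
    by (simp add: left_diff_distrib sum_subtractf)
  also have "(\<Sum>l<n. (if p = l then 1 else 0) * v $ l) = v $ p"
    by (rule sum_delta_left[OF p])
  finally show ?thesis .
qed

lemma final_div:
  fixes N tI tW tH :: real
  assumes "0 < tW" "tW \<le> tH" "N \<le> tI * tW" "0 \<le> N"
  shows "N / tH \<le> tI"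
proof -
  have "N / tH \<le> N / tW" using assms by (intro divide_left_mono) auto
  also have "\<dots> \<le> tI" using assms by (simp add: pos_divide_le_eq)
  finally show ?thesis .
qed

lemma expand_sq:
  fixes G :: "nat \<Rightarrow> nat \<Rightarrow> real" and u :: "nat \<Rightarrow> real"
  shows "(\<Sum>k<n. \<Sum>l<m. (G k l + a * u k * G i l)^2)
    = (\<Sum>k<n. \<Sum>l<m. (G k l)^2) + 2 * a * (\<Sum>k<n. u k * (\<Sum>l<m. G k l * G i l))
      + a^2 * ((\<Sum>k<n. (u k)^2) * (\<Sum>l<m. (G i l)^2))"
proof -
  have "(\<Sum>k<n. \<Sum>l<m. (G k l + a * u k * G i l)^2)
     = (\<Sum>k<n. \<Sum>l<m. (G k l)^2 + (2 * a) * (u k * (G k l * G i l)) + a^2 * ((u k)^2 * (G i l)^2))"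
    by (intro sum.cong refl) (simp add: power2_eq_square algebra_simps)
  also have "\<dots> = (\<Sum>k<n. \<Sum>l<m. (G k l)^2) + (2 * a) * (\<Sum>k<n. u k * (\<Sum>l<m. G k l * G i l))
      + a^2 * (\<Sum>k<n. (u k)^2 * (\<Sum>l<m. (G i l)^2))"
    by (simp add: sum.distrib sum_distrib_left)
  also have "(\<Sum>k<n. (u k)^2 * (\<Sum>l<m. (G i l)^2)) = (\<Sum>k<n. (u k)^2) * (\<Sum>l<m. (G i l)^2)"
    by (simp add: sum_distrib_right)
  finally show ?thesis by simp
qed

lemma vec_norm_col:
  assumes "X \<in> carrier_mat n n" "j < n"
  shows "vec_norm (col X j) = sqrt (\<Sum>k<n. (X $$ (k,j))^2)"
  using assms unfolding vec_norm_def scalar_prod_def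
  by (auto simp: lessThan_atLeast0 power2_eq_square intro!: arg_cong[of _ _ sqrt] sum.cong)

lemma XTX_entry:
  fixes X :: "real mat"
  assumes X: "X \<in> carrier_mat n n" and j: "j < n"
  shows "(X\<^sup>T * X) $$ (j,j) = (\<Sum>k<n. (X $$ (k,j))^2)"
proof -
  have XT: "X\<^sup>T \<in> carrier_mat n n" using X by auto
  show ?thesis unfolding mult_entry[OF XT X j j] using X j
    by (intro sum.cong refl) (auto simp: power2_eq_square)
qed

theorem theorem5p2:
  fixes A B :: "real mat" and n m T i j :: nat and w :: real
  assumes "A \<in> carrier_mat n n" and "B \<in> carrier_mat n m"
    and "rho (abs_mat A) < 1"
    and "T > 0"
    and "i < n" and "j < n" and "i \<noteq> j"
    and "rho (abs_mat A + \<bar>w\<bar> \<cdot>\<^sub>m unit_outer n j i) < 1"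
  shows "(pos_def_mat (gramian A B T) \<longrightarrow>
           trace_mat (inv_mat (gramian A B T)) \<ge> real n ^ 2 / trace_mat (Hmat A B))
       \<and> (pos_def_mat (gramian (A + w \<cdot>\<^sub>m unit_outer n j i) B T) \<longrightarrow>
           trace_mat (inv_mat (gramian (A + w \<cdot>\<^sub>m unit_outer n j i) B T)) \<ge>
             real n ^ 2 / ((1 + alpha_c A w * beta_c A) * trace_mat (Hmat A B)
                           + (alpha_c A w)^2 * gamma_c A * gamma_bar_c A B))"
proof -
  note A = assms(1) and B = assms(2) and i = assms(5) and j = assms(6) and ij = assms(7)
  have n: "n > 0" using i by auto
  have drA: "dim_row A = n" using A by auto
  let ?aA = "abs_mat A"
  have aA: "?aA \<in> carrier_mat n n" using A abs_mat_carrier[of A] by auto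
  have aAe: "?aA $$ (p,q) = \<bar>A $$ (p,q)\<bar>" if "p < n" "q < n" for p q
    using abs_mat_entry[of p A q] that A by auto
  have aAnn: "?aA $$ (p,q) \<ge> 0" if "p < n" "q < n" for p q using aAe[OF that] by simp
  have aB: "abs_mat B \<in> carrier_mat n m" using B abs_mat_carrier[of B] by auto
  define X where "X = Xmat A"
  have Xdef: "X = inv_mat (1\<^sub>m n - ?aA)" unfolding X_def Xmat_def drA ..
  note NX = neumann[OF aA aAnn assms(3) n]
  have XC: "X \<in> carrier_mat n n" and X1: "(1\<^sub>m n - ?aA) * X = 1\<^sub>m n"
    using NX(1) unfolding Xdef by auto
  have Xsum: "(\<Sum>t<T'. (?aA ^\<^sub>m t) $$ (p,q)) \<le> X $$ (p,q)" if "p < n" "q < n" for T' p q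
    using that NX(2) unfolding Xdef by blast
  have Xnn: "X $$ (p,q) \<ge> 0" if "p < n" "q < n" for p q using Xsum[OF that, of 0] by simp
  have Xeq: "X $$ (p,q) = (if p = q then 1 else 0) + (\<Sum>l<n. ?aA $$ (p,l) * X $$ (l,q))"
    if p: "p < n" and q: "q < n" for p q
  proof -
    have "(if p = q then 1 else 0) = ((1\<^sub>m n - ?aA) * X) $$ (p,q)" unfolding X1 using p q by simp
    also have "\<dots> = X $$ (p,q) - (\<Sum>l<n. ?aA $$ (p,l) * X $$ (l,q))"
      by (rule one_minus_mult_entry[OF aA XC p q])
    finally show ?thesis by simp
  qed
  define G where "G = X * abs_mat B"
  have GC: "G \<in> carrier_mat n m" unfolding G_def using XC aB by auto
  have Hdef: "Hmat A B = X * abs_mat B * (abs_mat B)\<^sup>T * X\<^sup>T" unfolding Hmat_def X_def ..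
  have Hdiag: "Hmat A B $$ (k,k) = (\<Sum>l<m. (G $$ (k,l))^2)" if "k < n" for k
    unfolding Hdef G_def by (rule diag_PQ[OF XC aB that])
  have drH: "dim_row (Hmat A B) = n" unfolding Hdef using XC by simp
  have trH: "trace_mat (Hmat A B) = (\<Sum>k<n. \<Sum>l<m. (G $$ (k,l))^2)"
    unfolding trace_mat_def drH using Hdiag by simp
  have trH0: "trace_mat (Hmat A B) \<ge> 0" unfolding trH by (intro sum_nonneg) auto
  have nn2: "(0::real) \<le> real n ^ 2" by simp
  have part1: "pos_def_mat (gramian A B T) \<longrightarrow>
           trace_mat (inv_mat (gramian A B T)) \<ge> real n ^ 2 / trace_mat (Hmat A B)"
  proof
    assume pd: "pos_def_mat (gramian A B T)"
    have WC: "gramian A B T \<in> carrier_mat n n" by (rule gramian_carrier[OF A B])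
    have "trace_mat (gramian A B T) \<le> (\<Sum>k<n. \<Sum>l<m. ((X * abs_mat B) $$ (k,l))^2)"
      by (rule gram_bound[OF A aA B XC _ Xsum]) (simp add: aAe)
    hence le: "trace_mat (gramian A B T) \<le> trace_mat (Hmat A B)" unfolding trH G_def .
    note TI = trace_inv_bound[OF pd WC n]
    show "trace_mat (inv_mat (gramian A B T)) \<ge> real n ^ 2 / trace_mat (Hmat A B)"
      by (rule final_div[OF TI(1) le TI(2) nn2])
  qed
  define E where "E = unit_outer n j i"
  have EC: "E \<in> carrier_mat n n" unfolding E_def by (rule uo_carrier)
  have Ee: "E $$ (p,q) = (if p = j \<and> q = i then 1 else 0)" if "p < n" "q < n" for p q
    unfolding E_def using uo_entry[OF that j i] .
  define Ah where "Ah = A + w \<cdot>\<^sub>m E"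
  have AhC: "Ah \<in> carrier_mat n n" unfolding Ah_def using A EC by auto
  define M2 where "M2 = ?aA + \<bar>w\<bar> \<cdot>\<^sub>m E"
  have M2C: "M2 \<in> carrier_mat n n" unfolding M2_def using aA EC by auto
  have M2e: "M2 $$ (p,q) = \<bar>A $$ (p,q)\<bar> + \<bar>w\<bar> * (if p = j \<and> q = i then 1 else 0)"
    if "p < n" "q < n" for p q
    unfolding M2_def using that aA EC aAe[OF that] Ee[OF that] by simp
  have M2nn: "M2 $$ (p,q) \<ge> 0" if "p < n" "q < n" for p q using M2e[OF that] by simp
  have Ahle: "\<bar>Ah $$ (p,q)\<bar> \<le> M2 $$ (p,q)" if "p < n" "q < n" for p q
  proof -
    have "Ah $$ (p,q) = A $$ (p,q) + w * (if p = j \<and> q = i then 1 else 0)"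
      unfolding Ah_def using that A EC Ee[OF that] by simp
    then show ?thesis unfolding M2e[OF that] by (simp add: abs_triangle_ineq[THEN order_trans] abs_mult)
  qed
  have rho2: "rho M2 < 1" using assms(8) unfolding M2_def E_def .
  note NY = neumann[OF M2C M2nn rho2 n]
  define Y where "Y = inv_mat (1\<^sub>m n - M2)"
  have YC: "Y \<in> carrier_mat n n" using NY(1) unfolding Y_def by auto
  have Ysum: "(\<Sum>t<T'. (M2 ^\<^sub>m t) $$ (p,q)) \<le> Y $$ (p,q)" if "p < n" "q < n" for T' p q
    using that NY(2) unfolding Y_def by blast
  have Ynn: "Y $$ (p,q) \<ge> 0" if "p < n" "q < n" for p q using Ysum[OF that, of 0] by simp
  have C2: "1\<^sub>m n - M2 \<in> carrier_mat n n" using M2C by auto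
  have Xjj: "X $$ (j,j) \<ge> 1"
  proof -
    have "0 \<le> (\<Sum>l<n. ?aA $$ (j,l) * X $$ (l,j))" using aAnn Xnn j by (intro sum_nonneg) auto
    then show ?thesis using Xeq[OF j j] by simp
  qed
  define c where "c = \<bar>w\<bar> * X $$ (i,j)"
  define d where "d = 1 - c"
  have Esum: "(\<Sum>l<n. E $$ (p,l) * f l) = (if p = j then f i else 0)" if p: "p < n" for p f
  proof (cases "p = j")
    case True
    have "(\<Sum>l<n. E $$ (p,l) * f l) = (\<Sum>l<n. (if l = i then 1 else 0) * f l)"
      using Ee[OF p] True by (intro sum.cong refl) auto
    also have "\<dots> = f i" by (rule sum_delta_left2[OF i])
    finally show ?thesis using True by simp
  next
    case False
    have "(\<Sum>l<n. E $$ (p,l) * f l) = (\<Sum>l<n. 0)" using Ee[OF p] False by (intro sum.cong refl) auto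
    then show ?thesis using False by simp
  qed
  have M2sum: "(\<Sum>l<n. M2 $$ (p,l) * f l) = (\<Sum>l<n. ?aA $$ (p,l) * f l) + \<bar>w\<bar> * (if p = j then f i else 0)"
    if p: "p < n" for p f
  proof -
    have "(\<Sum>l<n. M2 $$ (p,l) * f l) = (\<Sum>l<n. ?aA $$ (p,l) * f l + \<bar>w\<bar> * (E $$ (p,l) * f l))"
      unfolding M2_def using p aA EC by (intro sum.cong refl) (simp add: algebra_simps)
    also have "\<dots> = (\<Sum>l<n. ?aA $$ (p,l) * f l) + \<bar>w\<bar> * (\<Sum>l<n. E $$ (p,l) * f l)"
      by (simp add: sum.distrib sum_distrib_left)
    finally show ?thesis unfolding Esum[OF p] .
  qed
  have d0: "d \<noteq> 0"
  proof
    assume d: "d = 0"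
    define v where "v = col X j"
    have v: "v \<in> carrier_vec n" unfolding v_def using XC by auto
    have ve: "v $ l = X $$ (l,j)" if "l < n" for l unfolding v_def using XC that j by simp
    have "(1\<^sub>m n - M2) *\<^sub>v v = 0\<^sub>v n"
    proof (rule eq_vecI)
      show "dim_vec ((1\<^sub>m n - M2) *\<^sub>v v) = dim_vec (0\<^sub>v n)" using M2C by simp
      fix p assume "p < dim_vec (0\<^sub>v n)" hence p: "p < n" by simp
      have "((1\<^sub>m n - M2) *\<^sub>v v) $ p = X $$ (p,j) - (\<Sum>l<n. M2 $$ (p,l) * X $$ (l,j))"
        unfolding one_minus_vec_entry[OF M2C v p] ve[OF p]
        by (intro arg_cong[of _ _ "\<lambda>x. X $$ (p,j) - x"] sum.cong refl) (simp add: ve)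
      also have "\<dots> = X $$ (p,j) - (\<Sum>l<n. ?aA $$ (p,l) * X $$ (l,j)) - \<bar>w\<bar> * (if p = j then X $$ (i,j) else 0)"
        unfolding M2sum[OF p] by simp
      also have "\<dots> = 0" using Xeq[OF p j] d unfolding d_def c_def by auto
      finally show "((1\<^sub>m n - M2) *\<^sub>v v) $ p = 0\<^sub>v n $ p" using p by simp
    qed
    from neumann_ker[OF M2C rho2 n v this] have "v = 0\<^sub>v n" .
    hence "X $$ (j,j) = 0" using ve[OF j] j by simp
    with Xjj show False by simp
  qed
  define a where "a = \<bar>w\<bar> / d"
  have ad: "a * d = \<bar>w\<bar>" unfolding a_def using d0 by simp
  define Z where "Z = mat n n (\<lambda>(p,q). X $$ (p,q) + a * X $$ (p,j) * X $$ (i,q))"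
  have ZC: "Z \<in> carrier_mat n n" unfolding Z_def by simp
  have Ze: "Z $$ (p,q) = X $$ (p,q) + a * X $$ (p,j) * X $$ (i,q)" if "p < n" "q < n" for p q
    unfolding Z_def using that by simp
  have CZ: "(1\<^sub>m n - M2) * Z = 1\<^sub>m n"
  proof (rule eq_matI)
    show "dim_row ((1\<^sub>m n - M2) * Z) = dim_row (1\<^sub>m n)" "dim_col ((1\<^sub>m n - M2) * Z) = dim_col (1\<^sub>m n)"
      using ZC M2C by auto
    fix p q assume "p < dim_row (1\<^sub>m n)" "q < dim_col (1\<^sub>m n)"
    hence p: "p < n" and q: "q < n" by auto
    have s1: "(\<Sum>l<n. ?aA $$ (p,l) * Z $$ (l,q))
        = (\<Sum>l<n. ?aA $$ (p,l) * X $$ (l,q)) + a * X $$ (i,q) * (\<Sum>l<n. ?aA $$ (p,l) * X $$ (l,j))"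
    proof -
      have "(\<Sum>l<n. ?aA $$ (p,l) * Z $$ (l,q))
          = (\<Sum>l<n. ?aA $$ (p,l) * X $$ (l,q) + (a * X $$ (i,q)) * (?aA $$ (p,l) * X $$ (l,j)))"
        using Ze q by (intro sum.cong refl) (simp add: algebra_simps)
      also have "\<dots> = (\<Sum>l<n. ?aA $$ (p,l) * X $$ (l,q)) + a * X $$ (i,q) * (\<Sum>l<n. ?aA $$ (p,l) * X $$ (l,j))"
        by (simp add: sum.distrib sum_distrib_left)
      finally show ?thesis .
    qed
    have "((1\<^sub>m n - M2) * Z) $$ (p,q) = Z $$ (p,q) - (\<Sum>l<n. M2 $$ (p,l) * Z $$ (l,q))"
      by (rule one_minus_mult_entry[OF M2C ZC p q])
    also have "\<dots> = Z $$ (p,q) - ((\<Sum>l<n. ?aA $$ (p,l) * Z $$ (l,q)) + \<bar>w\<bar> * (if p = j then Z $$ (i,q) else 0))"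
      unfolding M2sum[OF p] ..
    also have "\<dots> = (if p = q then 1 else 0) + (if p = j then X $$ (i,q) * (a - \<bar>w\<bar> - \<bar>w\<bar> * a * X $$ (i,j)) else 0)"
      unfolding s1 Ze[OF p q] Ze[OF i q] using Xeq[OF p q] Xeq[OF p j]
      by (auto simp: algebra_simps)
    also have "a - \<bar>w\<bar> - \<bar>w\<bar> * a * X $$ (i,j) = 0"
      using ad unfolding d_def c_def by (simp add: algebra_simps)
    finally show "((1\<^sub>m n - M2) * Z) $$ (p,q) = 1\<^sub>m n $$ (p,q)" using p q by simp
  qed
  have ZC2: "Z * (1\<^sub>m n - M2) = 1\<^sub>m n" by (rule mat_mult_left_right_inverse[OF C2 ZC CZ])
  have YZ: "Y = Z" unfolding Y_def by (rule inv_mat_unique[OF C2 ZC CZ ZC2])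
  have Ye: "Y $$ (p,q) = X $$ (p,q) + a * X $$ (p,j) * X $$ (i,q)" if "p < n" "q < n" for p q
    unfolding YZ by (rule Ze[OF that])
  have dpos: "d > 0"
  proof -
    have "0 \<le> Y $$ (j,j)" by (rule Ynn[OF j j])
    also have "Y $$ (j,j) = X $$ (j,j) * (1 + a * X $$ (i,j))" unfolding Ye[OF j j] by (simp add: algebra_simps)
    also have "1 + a * X $$ (i,j) = 1 / d" unfolding a_def d_def c_def using d0 unfolding d_def c_def
      by (simp add: field_simps)
    finally have "0 \<le> X $$ (j,j) * (1 / d)" .
    hence "0 \<le> X $$ (j,j) / d" by simp
    hence "0 \<le> 1 / d" using Xjj by (auto simp: zero_le_divide_iff)
    then show ?thesis using d0 by (simp add: order_le_less)
  qed
  have a0: "a \<ge> 0" unfolding a_def using dpos by simp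
  have fin_off: "finite (offdiag n)" unfolding offdiag_def
    by (rule finite_subset[of _ "{..<n} \<times> {..<n}"]) auto
  have ij_off: "(i,j) \<in> offdiag n" unfolding offdiag_def using i j ij by simp
  have a_le: "a \<le> alpha_c A w"
  proof -
    have "a = alpha_pq A w i j" unfolding alpha_pq_def a_def d_def c_def X_def ..
    also have "\<dots> \<le> alpha_c A w" unfolding alpha_c_def drA
      using fin_off ij_off by (intro Max_ge) force+
    finally show ?thesis .
  qed
  define R where "R = sqrt (\<Sum>k<n. (X $$ (k,j))^2)"
  have beta1: "X $$ (i,j) + R \<le> beta_c A"
  proof -
    have "X $$ (i,j) \<le> Max ((\<lambda>(p, q). Xmat A $$ (p, q)) ` offdiag n)"
      unfolding X_def using fin_off ij_off by (intro Max_ge) force+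
    moreover have "R \<le> Max ((\<lambda>q. vec_norm (col (Xmat A) q)) ` {..<n})"
    proof -
      have "R = vec_norm (col X j)" unfolding R_def using vec_norm_col[OF XC j] by simp
      also have "\<dots> \<le> Max ((\<lambda>q. vec_norm (col (Xmat A) q)) ` {..<n})"
        unfolding X_def using j by (intro Max_ge) auto
      finally show ?thesis .
    qed
    ultimately show ?thesis unfolding beta_c_def drA by linarith
  qed
  have beta0: "beta_c A \<ge> 0"
  proof -
    have "2 * X $$ (i,j) \<le> Max ((\<lambda>(p, q). 2 * Xmat A $$ (p, q)) ` offdiag n)"
      unfolding X_def using fin_off ij_off by (intro Max_ge) force+
    then show ?thesis unfolding beta_c_def drA using Xnn[OF i j] by linarith
  qed
  have gam: "(\<Sum>k<n. (X $$ (k,j))^2) \<le> gamma_c A"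
  proof -
    have "(\<Sum>k<n. (X $$ (k,j))^2) = (X\<^sup>T * X) $$ (j,j)" using XTX_entry[OF XC j] by simp
    also have "\<dots> \<le> gamma_c A" unfolding gamma_c_def drA X_def using j by (intro Max_ge) auto
    finally show ?thesis .
  qed
  have gbar: "(\<Sum>l<m. (G $$ (i,l))^2) \<le> gamma_bar_c A B"
  proof -
    have "(\<Sum>l<m. (G $$ (i,l))^2) = Hmat A B $$ (i,i)" using Hdiag[OF i] by simp
    also have "\<dots> \<le> gamma_bar_c A B" unfolding gamma_bar_c_def drA using i by (intro Max_ge) auto
    finally show ?thesis .
  qed
  have part2: "pos_def_mat (gramian Ah B T) \<longrightarrow>
           trace_mat (inv_mat (gramian Ah B T)) \<ge>
             real n ^ 2 / ((1 + alpha_c A w * beta_c A) * trace_mat (Hmat A B)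
                           + (alpha_c A w)^2 * gamma_c A * gamma_bar_c A B)"
  proof
    assume pd: "pos_def_mat (gramian Ah B T)"
    have WC: "gramian Ah B T \<in> carrier_mat n n" by (rule gramian_carrier[OF AhC B])
    have le1: "trace_mat (gramian Ah B T) \<le> (\<Sum>k<n. \<Sum>l<m. ((Y * abs_mat B) $$ (k,l))^2)"
      by (rule gram_bound[OF AhC M2C B YC Ahle Ysum])
    have YBe: "(Y * abs_mat B) $$ (k,l) = G $$ (k,l) + a * X $$ (k,j) * G $$ (i,l)"
      if k: "k < n" and l: "l < m" for k l
    proof -
      have "(Y * abs_mat B) $$ (k,l) = (\<Sum>q<n. Y $$ (k,q) * abs_mat B $$ (q,l))"
        by (rule mult_entry[OF YC aB k l])
      also have "\<dots> = (\<Sum>q<n. X $$ (k,q) * abs_mat B $$ (q,l) + (a * X $$ (k,j)) * (X $$ (i,q) * abs_mat B $$ (q,l)))"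
        using Ye k by (intro sum.cong refl) (simp add: algebra_simps)
      also have "\<dots> = (\<Sum>q<n. X $$ (k,q) * abs_mat B $$ (q,l)) + (a * X $$ (k,j)) * (\<Sum>q<n. X $$ (i,q) * abs_mat B $$ (q,l))"
        by (simp add: sum.distrib sum_distrib_left)
      also have "\<dots> = G $$ (k,l) + a * X $$ (k,j) * G $$ (i,l)"
        unfolding G_def mult_entry[OF XC aB k l] mult_entry[OF XC aB i l] ..
      finally show ?thesis .
    qed
    define mid where "mid = (\<Sum>k<n. X $$ (k,j) * (\<Sum>l<m. G $$ (k,l) * G $$ (i,l)))"
    define tH where "tH = trace_mat (Hmat A B)"
    have S: "(\<Sum>k<n. \<Sum>l<m. ((Y * abs_mat B) $$ (k,l))^2)
       = tH + 2 * a * mid + a^2 * ((\<Sum>k<n. (X $$ (k,j))^2) * (\<Sum>l<m. (G $$ (i,l))^2))"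
    proof -
      have "(\<Sum>k<n. \<Sum>l<m. ((Y * abs_mat B) $$ (k,l))^2)
          = (\<Sum>k<n. \<Sum>l<m. (G $$ (k,l) + a * X $$ (k,j) * G $$ (i,l))^2)"
        using YBe by simp
      also have "\<dots> = tH + 2 * a * mid + a^2 * ((\<Sum>k<n. (X $$ (k,j))^2) * (\<Sum>l<m. (G $$ (i,l))^2))"
        unfolding tH_def trH mid_def by (rule expand_sq)
      finally show ?thesis .
    qed
    have midb: "mid \<le> (X $$ (i,j) + R) / 2 * tH"
      unfolding mid_def R_def tH_def trH
      using mid_bound[where u="\<lambda>k. X $$ (k,j)" and G="\<lambda>k l. G $$ (k,l)", OF i] Xnn j by auto
    have tH0: "tH \<ge> 0" unfolding tH_def by (rule trH0)
    have U0: "0 \<le> (\<Sum>k<n. (X $$ (k,j))^2)" by (intro sum_nonneg) auto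
    have V0: "0 \<le> (\<Sum>l<m. (G $$ (i,l))^2)" by (intro sum_nonneg) auto
    have "2 * a * mid \<le> a * ((X $$ (i,j) + R) * tH)"
      using mult_left_mono[OF midb a0] by (simp add: algebra_simps)
    also have "\<dots> \<le> a * (beta_c A * tH)"
      using beta1 tH0 a0 by (intro mult_left_mono mult_right_mono) auto
    also have "\<dots> \<le> alpha_c A w * (beta_c A * tH)"
      using a_le beta0 tH0 by (intro mult_right_mono) auto
    finally have t2: "2 * a * mid \<le> alpha_c A w * beta_c A * tH" by (simp add: ac_simps)
    have t3: "a^2 * ((\<Sum>k<n. (X $$ (k,j))^2) * (\<Sum>l<m. (G $$ (i,l))^2))
        \<le> (alpha_c A w)^2 * (gamma_c A * gamma_bar_c A B)"
    proof (rule mult_mono)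
      show "a^2 \<le> (alpha_c A w)^2" using a0 a_le by (intro power_mono) auto
      show "(\<Sum>k<n. (X $$ (k,j))^2) * (\<Sum>l<m. (G $$ (i,l))^2) \<le> gamma_c A * gamma_bar_c A B"
        using gam gbar U0 V0 by (intro mult_mono) auto
      show "0 \<le> (alpha_c A w)^2" by simp
      show "0 \<le> (\<Sum>k<n. (X $$ (k,j))^2) * (\<Sum>l<m. (G $$ (i,l))^2)" using U0 V0 by simp
    qed
    have le2: "trace_mat (gramian Ah B T) \<le> (1 + alpha_c A w * beta_c A) * tH
        + (alpha_c A w)^2 * gamma_c A * gamma_bar_c A B"
      using le1 S t2 t3 by (simp add: algebra_simps)
    note TI = trace_inv_bound[OF pd WC n]
    show "trace_mat (inv_mat (gramian Ah B T)) \<ge>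
             real n ^ 2 / ((1 + alpha_c A w * beta_c A) * trace_mat (Hmat A B)
                           + (alpha_c A w)^2 * gamma_c A * gamma_bar_c A B)"
      using final_div[OF TI(1) le2 TI(2) nn2] unfolding tH_def .
  qed
  show ?thesis using part1 part2 unfolding Ah_def E_def by blast
qed

end
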